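(* Let $n,m$ be positive integers, $P(z)=\sum_{i=0}^{m}\binom{m}{i}\frac{(-1)^{i}}{n+m+1-i} z^{n+m+1-i}+1$ (so $P'(z)=z^n(z-1)^m$), and let $S$ be the set of zeros of $P$. Let $f,g$ be non-constant meromorphic functions on $\mathbb{C}$ with $E_f(S,0)=E_g(S,0)$, put $F=P(f)$, $G=P(g)$, and suppose $$H=\left(\frac{F''}{F'}-\frac{2F'}{F}\right)-\left(\frac{G''}{G'}-\frac{2G'}{G}\right)\not\equiv 0 .$$ Then $$\overline N(r,\infty;H)\leq \overline N(r,0;f)+\overline N(r,1;f)+\overline N(r,0;g)+\overline N(r,1;g)+\overline N_{*}(r,0;F,G)+\overline N(r,\infty;f)+\overline N(r,\infty;g)+\overline N_{0}(r,0;f')+\overline N_{0}(r,0;g').$$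
   Context: $\overline N(r,a;h)$ is the reduced counting function of $a$-points of $h$ (each distinct point counted once). $E_f(S,0)=E_g(S,0)$ means $\bigcup_{a\in S}\{z:f(z)=a\}=\bigcup_{a\in S}\{z:g(z)=a\}$ as sets (multiplicities ignored); then $F$ and $G$ have the same zero set. $\overline N_{*}(r,0;F,G)$ is the reduced counting function of those zeros of $F$ whose multiplicity differs from the multiplicity of the corresponding zero of $G$. $\overline N_{0}(r,0;f')$ is the reduced counting function of those zeros of $f'$ which are not zeros of $F f(f-1)$; $\overline N_{0}(r,0;g')$ is the reduced counting function of zeros of $g'$ which are not zeros of $G g(g-1)$. *)

theory Defs
  imports "HOL-Complex_Analysis.Complex_Analysis"
begin

definition Ppoly :: "nat \<Rightarrow> nat \<Rightarrow> complex \<Rightarrow> complex" where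
  "Ppoly n m z = (\<Sum>i=0..m. of_nat (m choose i) * (-1) ^ i / of_nat (n + m + 1 - i)
                      * z ^ (n + m + 1 - i)) + 1"

definition a_points :: "(complex \<Rightarrow> complex) \<Rightarrow> complex \<Rightarrow> complex set" where
  "a_points h a = {z. \<not> is_pole h z \<and> h z = a}"

definition pole_points :: "(complex \<Rightarrow> complex) \<Rightarrow> complex set" where
  "pole_points h = {z. is_pole h z}"

definition red_count :: "complex set \<Rightarrow> real \<Rightarrow> real" where
  "red_count A r =
     integral {0..r} (\<lambda>t. (real (card (A \<inter> cball 0 t)) - real (card (A \<inter> {0}))) / t)
     + real (card (A \<inter> {0})) * ln r"

text \<open>E_h(S,0): the set of points where h takes a value in S (multiplicities ignored).\<close>
definition E_set :: "(complex \<Rightarrow> complex) \<Rightarrow> complex set \<Rightarrow> complex set" where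
  "E_set h S = {z. \<not> is_pole h z \<and> h z \<in> S}"

end

theory Submission
  imports Defs "HOL-Computational_Algebra.Polynomial"
begin

definition wt :: "real \<Rightarrow> complex \<Rightarrow> real" where
  "wt r a = (if a = 0 then ln r else ln (r / norm a))"

lemma integral_step:
  fixes c r :: real assumes "0 < c" "c \<le> r"
  shows "((\<lambda>t. if c \<le> t then 1 / t else 0) has_integral (ln r - ln c)) {0..r}"
proof -
  have "((\<lambda>t. 1 / t) has_integral (ln r - ln c)) {c..r}"
  proof (rule fundamental_theorem_of_calculus)
    show "c \<le> r" by fact
    fix x assume "x \<in> {c..r}"
    hence "x > 0" using assms by auto
    thus "(ln has_vector_derivative 1 / x) (at x within {c..r})"
      by (auto intro!: derivative_eq_intros simp: has_real_derivative_iff_has_vector_derivative[symmetric])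
  qed
  hence "((\<lambda>t. if t \<in> cbox c r then 1 / t else 0) has_integral (ln r - ln c)) (cbox 0 r)"
    using assms by (intro has_integral_restrict_closed_subinterval) auto
  moreover have "(\<lambda>t. if t \<in> cbox c r then 1 / t else 0) x = (if c \<le> x then 1 / x else 0)"
    if "x \<in> {0..r}" for x using that by auto
  ultimately show ?thesis
    unfolding cbox_interval by (rule has_integral_eq[rotated])
qed

lemma red_count_sum:
  assumes fin: "finite (X \<inter> cball 0 r)" and r: "r > 0"
  shows "red_count X r = (\<Sum>a\<in>X \<inter> cball 0 r. wt r a)"
proof -
  define Y where "Y = (X - {0}) \<inter> cball 0 r"
  have finY: "finite Y" using fin unfolding Y_def by (rule finite_subset[rotated]) auto
  have eq: "(real (card (X \<inter> cball 0 t)) - real (card (X \<inter> {0}))) / t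
          = (\<Sum>a\<in>Y. if norm a \<le> t then 1 / t else 0)" if t: "t \<in> {0..r}" for t
  proof -
    have "X \<inter> cball 0 t = (X \<inter> {0}) \<union> {a\<in>Y. norm a \<le> t}"
      using t by (auto simp: Y_def)
    moreover have "finite (X \<inter> {0})" by auto
    moreover have "finite {a\<in>Y. norm a \<le> t}" using finY by auto
    moreover have "(X \<inter> {0}) \<inter> {a\<in>Y. norm a \<le> t} = {}" by (auto simp: Y_def)
    ultimately have "card (X \<inter> cball 0 t) = card (X \<inter> {0}) + card {a\<in>Y. norm a \<le> t}"
      by (simp add: card_Un_disjoint)
    hence "real (card (X \<inter> cball 0 t)) - real (card (X \<inter> {0})) = real (card {a\<in>Y. norm a \<le> t})"
      by simp
    also have "\<dots> = (\<Sum>a\<in>{a\<in>Y. norm a \<le> t}. 1)"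
      by simp
    also have "\<dots> = (\<Sum>a\<in>Y. if norm a \<le> t then 1 else 0)"
      using finY by (rule sum.inter_filter)
    finally have e: "real (card (X \<inter> cball 0 t)) - real (card (X \<inter> {0})) = (\<Sum>a\<in>Y. if norm a \<le> t then 1 else 0)" .
    show ?thesis unfolding e sum_divide_distrib by (intro sum.cong) auto
  qed
  have HI: "((\<lambda>t. \<Sum>a\<in>Y. if norm a \<le> t then 1 / t else 0) has_integral (\<Sum>a\<in>Y. ln r - ln (norm a))) {0..r}"
  proof (rule has_integral_sum[OF finY])
    fix a assume "a \<in> Y"
    hence "0 < norm a" "norm a \<le> r" by (auto simp: Y_def)
    thus "((\<lambda>t. if norm a \<le> t then 1 / t else 0) has_integral (ln r - ln (norm a))) {0..r}"
      by (rule integral_step)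
  qed
  have "integral {0..r} (\<lambda>t. (real (card (X \<inter> cball 0 t)) - real (card (X \<inter> {0}))) / t)
       = (\<Sum>a\<in>Y. ln r - ln (norm a))"
    by (intro integral_unique has_integral_eq[OF _ HI]) (simp add: eq)
  also have "\<dots> = (\<Sum>a\<in>Y. wt r a)"
    by (intro sum.cong refl) (auto simp: Y_def wt_def ln_div r)
  finally have I: "integral {0..r} (\<lambda>t. (real (card (X \<inter> cball 0 t)) - real (card (X \<inter> {0}))) / t)
       = (\<Sum>a\<in>Y. wt r a)" .
  have A: "(\<Sum>a\<in>X \<inter> cball 0 r. wt r a) = (\<Sum>a\<in>Y. wt r a) + (\<Sum>a\<in>X \<inter> {0}. wt r a)"
  proof -
    have "X \<inter> cball 0 r = Y \<union> (X \<inter> {0})" using r by (auto simp: Y_def)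
    thus ?thesis using finY by (subst sum.union_disjoint[symmetric]) (auto simp: Y_def)
  qed
  have B: "(\<Sum>a\<in>X \<inter> {0}. wt r a) = real (card (X \<inter> {0})) * ln r"
    by (cases "0 \<in> X") (auto simp: wt_def)
  have C: "red_count X r = (\<Sum>a\<in>Y. wt r a) + real (card (X \<inter> {0})) * ln r"
    by (simp only: red_count_def I)
  show ?thesis unfolding A B C ..
qed

lemma wt_nonneg: assumes "r \<ge> 1" "a \<in> cball 0 r" shows "wt r a \<ge> 0"
proof (cases "a = 0")
  case True thus ?thesis using assms by (simp add: wt_def)
next
  case False
  hence "norm a > 0" by simp
  moreover have "norm a \<le> r" using assms by simp
  ultimately have "1 \<le> r / norm a" by (simp add: le_divide_eq)
  hence "ln (r / norm a) \<ge> 0" by (rule ln_ge_zero)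
  thus ?thesis using False unfolding wt_def by simp
qed

lemma Ppoly_eq: "Ppoly n m = (\<lambda>z. (\<Sum>i=0..m. (of_nat (m choose i) * (-1) ^ i / of_nat (n + m + 1 - i))
                      * z ^ (n + m + 1 - i)) + 1)"
  by (rule ext) (simp add: Ppoly_def)

lemma Ppoly_analytic: "Ppoly n m analytic_on A"
  unfolding Ppoly_eq by (intro analytic_intros)

definition Pp :: "nat \<Rightarrow> nat \<Rightarrow> complex poly" where
  "Pp n m = (\<Sum>i=0..m. monom (of_nat (m choose i) * (-1) ^ i / of_nat (n + m + 1 - i)) (n + m + 1 - i)) + 1"

lemma poly_Pp: "poly (Pp n m) z = Ppoly n m z"
  by (simp add: Pp_def Ppoly_def poly_sum poly_monom)

lemma Ppoly_roots_finite: "finite {z. Ppoly n m z = 0}"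
proof -
  have "(\<Sum>i=0..m. of_nat (m choose i) * (-1) ^ i / of_nat (n + m + 1 - i)
                      * (0::complex) ^ (n + m + 1 - i)) = 0"
    by (intro sum.neutral) auto
  hence "poly (Pp n m) 0 = 1"
    unfolding poly_Pp Ppoly_def by simp
  hence "Pp n m \<noteq> 0" by auto
  from poly_roots_finite[OF this] show ?thesis by (simp add: poly_Pp)
qed

lemma Ppoly_deriv: "(Ppoly n m has_field_derivative z ^ n * (z - 1) ^ m) (at z)"
proof -
  define N where "N = (\<lambda>i. n + m + 1 - i)"
  define c where "c = (\<lambda>i. of_nat (m choose i) * (-1) ^ i / of_nat (N i) :: complex)"
  have "((\<lambda>z. (\<Sum>i=0..m. c i * z ^ (N i)) + 1) has_field_derivative
          (\<Sum>i=0..m. c i * (of_nat (N i) * z ^ (N i - Suc 0))) + 0) (at z)"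
  proof (intro derivative_intros DERIV_cmult)
    fix i
    show "((\<lambda>x. x ^ N i) has_field_derivative of_nat (N i) * z ^ (N i - Suc 0)) (at z)"
      using DERIV_power[OF DERIV_ident, of "N i" z UNIV] by simp
  qed
  moreover have "(\<Sum>i=0..m. c i * (of_nat (N i) * z ^ (N i - Suc 0)))
        = (\<Sum>i=0..m. z ^ n * (of_nat (m choose i) * (-1) ^ i * z ^ (m - i)))"
  proof (intro sum.cong refl)
    fix i assume i: "i \<in> {0..m}"
    hence "N i \<noteq> 0" "N i - Suc 0 = n + (m - i)" by (auto simp: N_def)
    thus "c i * (of_nat (N i) * z ^ (N i - Suc 0)) = z ^ n * (of_nat (m choose i) * (-1) ^ i * z ^ (m - i))"
      unfolding c_def by (simp add: power_add field_simps)
  qed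
  moreover have "(\<Sum>i=0..m. z ^ n * (of_nat (m choose i) * (-1) ^ i * z ^ (m - i))) = z ^ n * (z - 1) ^ m"
  proof -
    have "(-1 + z) ^ m = (\<Sum>i\<le>m. of_nat (m choose i) * (-1) ^ i * z ^ (m - i))"
      by (rule binomial_ring)
    thus ?thesis by (simp add: sum_distrib_left atLeast0AtMost)
  qed
  moreover have "Ppoly n m = (\<lambda>z. (\<Sum>i=0..m. c i * z ^ (N i)) + 1)"
    unfolding Ppoly_eq c_def N_def ..
  ultimately show ?thesis by simp
qed

lemma deriv_pow_mult:
  assumes "open B" "v holomorphic_on B" "\<And>w. w \<in> B \<Longrightarrow> h w = (w - z) ^ j * v w" "w \<in> B"
  shows "deriv h w = of_nat j * (w - z) ^ (j - 1) * v w + (w - z) ^ j * deriv v w"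
proof -
  have dv: "(v has_field_derivative deriv v w) (at w)"
    by (rule holomorphic_derivI[OF assms(2,1,4)])
  have "((\<lambda>w. (w - z) ^ j * v w) has_field_derivative
          (of_nat j * (1 * (w - z) ^ (j - Suc 0))) * v w + (w - z) ^ j * deriv v w) (at w)"
    by (auto intro!: derivative_eq_intros dv)
  hence "(h has_field_derivative (of_nat j * (1 * (w - z) ^ (j - Suc 0))) * v w + (w - z) ^ j * deriv v w) (at w)"
    by (rule has_field_derivative_transform_within_open[OF _ assms(1,4)]) (use assms(3) in auto)
  hence "deriv h w = (of_nat j * (1 * (w - z) ^ (j - Suc 0))) * v w + (w - z) ^ j * deriv v w"
    by (rule DERIV_imp_deriv)
  thus ?thesis by simp
qed

lemma quot_lemma:
  fixes x v v' :: complex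
  assumes "x \<noteq> 0" "v \<noteq> 0"
  shows "(of_nat j * x ^ (j - 1) * v + x ^ j * v') / (x ^ j * v) = of_nat j / x + v' / v"
proof (cases j)
  case 0 thus ?thesis using assms by simp
next
  case (Suc i)
  thus ?thesis using assms by (simp add: field_simps)
qed

lemma alg_lemma:
  fixes x c a b :: complex
  assumes "x \<noteq> 0"
  shows "(c - 1) / x + a - 2 * (c / x + b) = a - 2 * b - (c + 1) / x"
  using assms by (simp add: field_simps)

lemma K2:
  fixes F :: "complex \<Rightarrow> complex"
  assumes an: "F analytic_on {z}" and Fz: "F z = 0" and fr: "frequently (\<lambda>w. F w \<noteq> 0) (at z)"
  shows "\<exists>\<phi> e. e > 0 \<and> \<phi> holomorphic_on ball z e \<and>
           (\<forall>w\<in>ball z e - {z}. deriv (deriv F) w / deriv F w - 2 * deriv F w / F w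
                 = \<phi> w - (of_int (zorder F z) + 1) / (w - z))"
proof -
  obtain \<epsilon> where \<epsilon>: "\<epsilon> > 0" "F holomorphic_on ball z \<epsilon>" using an analytic_at_ball by blast
  have "frequently (\<lambda>w. F w \<noteq> 0 \<and> w \<in> ball z \<epsilon>) (at z)"
    using frequently_eventually_frequently[OF fr eventually_at_in_open'[of "ball z \<epsilon>" z]] \<epsilon> by auto
  from frequently_ex[OF this] have ex: "\<exists>w\<in>ball z \<epsilon>. F w \<noteq> 0" by blast
  define n where "n = zorder F z"
  define u where "u = zor_poly F z"
  have ZE: "(if F z = 0 then n > 0 else n = 0) \<and> (\<exists>r. r > 0 \<and> cball z r \<subseteq> ball z \<epsilon> \<and> u holomorphic_on cball z r
    \<and> (\<forall>w\<in>cball z r. F w = u w * (w - z) ^ nat n \<and> u w \<noteq> 0))"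
    unfolding n_def u_def by (rule zorder_exist_zero[OF \<epsilon>(2) open_ball connected_ball _ ex]) (use \<epsilon> in auto)
  hence n: "n > 0" using Fz by simp
  from ZE obtain r where r: "r > 0" "cball z r \<subseteq> ball z \<epsilon>" "u holomorphic_on cball z r"
     "\<forall>w\<in>cball z r. F w = u w * (w - z) ^ nat n \<and> u w \<noteq> 0"
    by blast
  define k where "k = nat n"
  have k: "k \<ge> 1" "(of_int n :: complex) = of_nat k" using n by (auto simp: k_def)
  define B where "B = ball z r"
  have oB: "open B" by (simp add: B_def)
  have uB: "u holomorphic_on B" using r(3) by (rule holomorphic_on_subset) (auto simp: B_def)
  have FB: "\<And>w. w\<in>B \<Longrightarrow> F w = (w - z) ^ k * u w" using r(4) by (auto simp: B_def k_def mult.commute)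
  have unz: "\<And>w. w \<in> B \<Longrightarrow> u w \<noteq> 0" using r(4) by (auto simp: B_def)
  have dF: "\<And>w. w\<in>B \<Longrightarrow> deriv F w = of_nat k * (w - z) ^ (k - 1) * u w + (w - z) ^ k * deriv u w"
    by (rule deriv_pow_mult[OF oB uB FB])
  define v where "v = (\<lambda>w. of_nat k * u w + (w - z) * deriv u w)"
  have vB: "v holomorphic_on B" unfolding v_def using uB oB by (auto intro!: holomorphic_intros)
  have dF': "deriv F w = (w - z) ^ (k - 1) * v w" if "w \<in> B" for w
  proof -
    have e: "(w - z) ^ k = (w - z) ^ (k - 1) * (w - z)" using k(1)
      by (metis Suc_diff_le diff_Suc_1 power_Suc2)
    show ?thesis unfolding dF[OF that] e v_def by (simp only: distrib_left mult_ac)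
  qed
  have zB: "z \<in> B" using r(1) by (simp add: B_def)
  have vz: "v z \<noteq> 0" using unz[OF zB] k(1) by (simp add: v_def)
  have "continuous_on B v" using vB by (rule holomorphic_on_imp_continuous_on)
  hence "isCont v z" using oB zB by (simp add: continuous_on_eq_continuous_at)
  from continuous_at_avoid[OF this vz] obtain r2 where r2: "r2 > 0" "\<forall>y. dist z y < r2 \<longrightarrow> v y \<noteq> 0"
    by blast
  define e where "e = min r r2"
  define B2 where "B2 = ball z e"
  have oB2: "open B2" by (simp add: B2_def)
  have B2B: "B2 \<subseteq> B" by (auto simp: B2_def B_def e_def)
  have vnz: "\<And>w. w\<in>B2 \<Longrightarrow> v w \<noteq> 0" using r2 by (auto simp: B2_def e_def dist_commute)
  have vB2: "v holomorphic_on B2" using vB B2B by (rule holomorphic_on_subset)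
  have uB2: "u holomorphic_on B2" using uB B2B by (rule holomorphic_on_subset)
  have ddF: "\<And>w. w\<in>B2 \<Longrightarrow> deriv (deriv F) w
        = of_nat (k-1) * (w - z) ^ (k - 1 - 1) * v w + (w - z) ^ (k - 1) * deriv v w"
    by (rule deriv_pow_mult[OF oB2 vB2]) (use dF' B2B in auto)
  define \<phi> where "\<phi> = (\<lambda>w. deriv v w / v w - 2 * (deriv u w / u w))"
  have "\<phi> holomorphic_on B2" unfolding \<phi>_def using vB2 uB2 oB2 vnz unz B2B
    by (auto intro!: holomorphic_intros)
  show ?thesis
  proof (intro exI conjI ballI)
    show "e > 0" using r r2 by (simp add: e_def)
    show "\<phi> holomorphic_on ball z e" using \<open>\<phi> holomorphic_on B2\<close> by (simp add: B2_def)
    fix w assume w: "w \<in> ball z e - {z}"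
    hence wB2: "w \<in> B2" and wB: "w \<in> B" and x: "w - z \<noteq> 0" using B2B by (auto simp: B2_def)
    have 1: "deriv (deriv F) w / deriv F w = of_nat (k-1) / (w-z) + deriv v w / v w"
      unfolding ddF[OF wB2] dF'[OF wB] by (rule quot_lemma) (use x vnz wB2 in auto)
    have 2: "deriv F w / F w = of_nat k / (w-z) + deriv u w / u w"
      unfolding dF[OF wB] FB[OF wB] by (rule quot_lemma) (use x unz wB in auto)
    have 3: "(of_nat (k-1) :: complex) = of_nat k - 1" using k(1) by (simp add: of_nat_diff)
    show "deriv (deriv F) w / deriv F w - 2 * deriv F w / F w = \<phi> w - (of_int (zorder F z) + 1) / (w - z)"
      unfolding 1 n_def[symmetric] k(2) 3 \<phi>_def times_divide_eq_right[symmetric] 2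
      by (rule alg_lemma[OF x])
  qed
qed

lemma sum_Un_le:
  fixes h :: "'a \<Rightarrow> real"
  assumes "finite A" "finite B" "\<And>x. x \<in> A \<union> B \<Longrightarrow> h x \<ge> 0"
  shows "sum h (A \<union> B) \<le> sum h A + sum h B"
proof -
  have "sum h (A \<inter> B) \<ge> 0" using assms by (intro sum_nonneg) auto
  thus ?thesis using sum_Un[OF assms(1,2), of h] by linarith
qed

lemma fin_Union_list:
  assumes "\<forall>B\<in>set Bs. finite (B \<inter> C)"
  shows "finite (\<Union>(set Bs) \<inter> C)"
proof -
  have e: "\<Union>(set Bs) \<inter> C = (\<Union>B\<in>set Bs. B \<inter> C)" by auto
  show ?thesis unfolding e using assms by (intro finite_UN_I) auto
qed

lemma red_count_union_list:
  assumes r: "r \<ge> 1" and sub: "A \<subseteq> \<Union>(set Bs)" and fin: "\<forall>B\<in>set Bs. finite (B \<inter> cball 0 r)"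
  shows "red_count A r \<le> (\<Sum>B\<leftarrow>Bs. red_count B r)"
proof -
  have r0: "r > 0" using r by simp
  have finU: "finite (\<Union>(set Bs) \<inter> cball 0 r)" using fin by (rule fin_Union_list)
  have finA: "finite (A \<inter> cball 0 r)" by (rule finite_subset[OF _ finU]) (use sub in auto)
  have "red_count A r = (\<Sum>a\<in>A \<inter> cball 0 r. wt r a)" by (rule red_count_sum[OF finA r0])
  also have "\<dots> \<le> (\<Sum>a\<in>\<Union>(set Bs) \<inter> cball 0 r. wt r a)"
    by (rule sum_mono2[OF finU]) (use sub wt_nonneg r in auto)
  also have "\<dots> \<le> (\<Sum>B\<leftarrow>Bs. (\<Sum>a\<in>B \<inter> cball 0 r. wt r a))"
    using fin
  proof (induction Bs)
    case Nil thus ?case by simp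
  next
    case (Cons B Bs)
    have fB: "finite (B \<inter> cball 0 r)" and fU: "finite (\<Union>(set Bs) \<inter> cball 0 r)"
      using Cons.prems fin_Union_list[of Bs "cball 0 r"] by auto
    have "(\<Sum>a\<in>\<Union>(set (B # Bs)) \<inter> cball 0 r. wt r a)
        = (\<Sum>a\<in>(B \<inter> cball 0 r) \<union> (\<Union>(set Bs) \<inter> cball 0 r). wt r a)"
      by (intro sum.cong) auto
    also have "\<dots> \<le> (\<Sum>a\<in>B \<inter> cball 0 r. wt r a) + (\<Sum>a\<in>\<Union>(set Bs) \<inter> cball 0 r. wt r a)"
      by (rule sum_Un_le[OF fB fU]) (use wt_nonneg r in auto)
    also have "\<dots> \<le> (\<Sum>a\<in>B \<inter> cball 0 r. wt r a) + (\<Sum>B\<leftarrow>Bs. (\<Sum>a\<in>B \<inter> cball 0 r. wt r a))"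
      using Cons by simp
    finally show ?case by simp
  qed
  also have "\<dots> = (\<Sum>B\<leftarrow>Bs. red_count B r)"
    using fin by (induction Bs) (auto simp: red_count_sum[OF _ r0])
  finally show ?thesis .
qed

lemma fin_of_sparse:
  fixes X :: "complex set"
  assumes "X sparse_in UNIV"
  shows "finite (X \<inter> cball 0 r)"
proof -
  have "X sparse_in cball 0 r" using assms by (rule sparse_in_subset) auto
  from sparse_in_compact_finite[OF this compact_cball] show ?thesis by (simp add: Int_commute)
qed

lemma value_sparse:
  assumes "f nicely_meromorphic_on UNIV" "\<not> f constant_on UNIV"
  shows "{z. f z = c} sparse_in UNIV"
proof -
  from nicely_meromorphic_imp_constant_or_avoid[OF assms(1) open_UNIV connected_UNIV, of c]
  have "(\<forall>x\<in>UNIV. f x = c) \<or> (\<forall>\<^sub>\<approx>x\<in>UNIV. f x \<noteq> c)" .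
  moreover have "\<not>(\<forall>x\<in>UNIV. f x = c)" using assms(2) unfolding constant_on_def by blast
  ultimately show ?thesis by (auto simp: eventually_cosparse)
qed

lemma pole_sparse:
  assumes "f nicely_meromorphic_on UNIV"
  shows "{z. is_pole f z} sparse_in UNIV"
proof -
  have "f meromorphic_on UNIV" using assms by (simp add: nicely_meromorphic_on_def)
  from meromorphic_on_imp_not_pole_cosparse[OF this] show ?thesis by (simp add: eventually_cosparse)
qed

lemma deriv_sparse:
  assumes nm: "f nicely_meromorphic_on UNIV" and nc: "\<not> f constant_on UNIV"
  shows "{z. deriv f z = 0} sparse_in UNIV"
proof -
  have mf: "f meromorphic_on UNIV" using nm by (simp add: nicely_meromorphic_on_def)
  have m: "deriv f meromorphic_on UNIV" using mf by (rule meromorphic_on_deriv)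
  from meromorphic_imp_constant_or_avoid[OF m open_UNIV connected_UNIV, of 0]
  consider "eventually (\<lambda>z. deriv f z = 0) (cosparse UNIV)" | "eventually (\<lambda>z. deriv f z \<noteq> 0) (cosparse UNIV)"
    by blast
  thus ?thesis
  proof cases
    case 2 thus ?thesis by (simp add: eventually_cosparse)
  next
    case 1
    have "eventually (\<lambda>z. \<not>is_pole f z) (cosparse UNIV)"
      by (rule meromorphic_on_imp_not_pole_cosparse[OF mf])
    with 1 have "eventually (\<lambda>z. \<not>is_pole f z \<and> deriv f z = 0) (cosparse UNIV)"
      by (rule eventually_conj[rotated])
    hence "eventually (\<lambda>z. \<not>is_pole f z \<and> deriv f z = 0) (at 0 within UNIV)"
      by (rule eventually_cosparse_imp_eventually_at) simp
    then obtain e where e: "e > 0" "\<forall>w. w \<noteq> 0 \<and> dist w 0 < e \<longrightarrow> \<not>is_pole f w \<and> deriv f w = 0"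
      unfolding eventually_at by auto
    define w1 where "w1 = (of_real (e/2) :: complex)"
    define D where "D = ball w1 (e/2)"
    have sub: "w \<noteq> 0 \<and> dist w 0 < e" if "w \<in> D" for w
    proof -
      have d: "dist w1 w < e/2" using that by (simp add: D_def)
      have n1: "norm w1 = e/2" using e(1) by (simp add: w1_def)
      have "norm w \<le> norm w1 + dist w1 w"
        using norm_triangle_ineq4[of w1 "w1 - w"] by (simp add: dist_norm)
      hence "dist w 0 < e" using d n1 by simp
      moreover have "w \<noteq> 0" using d n1 by (auto simp: dist_norm)
      ultimately show ?thesis by simp
    qed
    have an: "f analytic_on D"
    proof (rule analytic_on_analytic_at[THEN iffD2], intro ballI)
      fix w assume "w \<in> D"
      from e(2)[rule_format, OF sub[OF this]] have "\<not> is_pole f w" by (rule conjunct1)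
      thus "f analytic_on {w}" by (rule nicely_meromorphic_on_imp_analytic_at[OF nm UNIV_I])
    qed
    hence hol: "f holomorphic_on D" by (rule analytic_imp_holomorphic)
    have "\<exists>c. \<forall>x\<in>D. f x = c"
    proof (rule has_field_derivative_zero_constant)
      show "convex D" by (simp add: D_def)
      fix x assume x: "x \<in> D"
      have "(f has_field_derivative deriv f x) (at x within D)"
        by (rule holomorphic_derivI[OF hol _ x]) (simp add: D_def)
      moreover from e(2)[rule_format, OF sub[OF x]] have "deriv f x = 0" by (rule conjunct2)
      ultimately show "(f has_field_derivative 0) (at x within D)" by simp
    qed
    then obtain c where c: "\<forall>x\<in>D. f x = c" by blast
    have w1D: "w1 \<in> D" using e(1) by (simp add: D_def)
    have ev1: "eventually (\<lambda>x. f x = c) (at w1)"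
      using eventually_at_in_open'[of D w1] w1D c by (auto simp: D_def elim!: eventually_mono)
    have "eventually (\<lambda>x. f x \<noteq> c) (cosparse UNIV)"
      using value_sparse[OF nm nc, of c] by (simp add: eventually_cosparse)
    hence "eventually (\<lambda>x. f x \<noteq> c) (at w1 within UNIV)"
      by (rule eventually_cosparse_imp_eventually_at) simp
    with ev1 have "eventually (\<lambda>x. False) (at w1)"
      by eventually_elim auto
    thus ?thesis by simp
  qed
qed

lemma K1:
  assumes "F analytic_on {z}" "F z \<noteq> 0" "deriv F z \<noteq> 0"
  shows "(\<lambda>w. deriv (deriv F) w / deriv F w - 2 * deriv F w / F w) analytic_on {z}"
  using assms by (auto intro!: analytic_intros)

theorem lemma2p3:
  fixes n m :: nat and f g :: "complex \<Rightarrow> complex" and r :: real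
  assumes "n > 0" and "m > 0"
    and "f nicely_meromorphic_on UNIV" and "g nicely_meromorphic_on UNIV"
    and "\<not> f constant_on UNIV" and "\<not> g constant_on UNIV"
    and "E_set f {z. Ppoly n m z = 0} = E_set g {z. Ppoly n m z = 0}"
    and "F = (\<lambda>z. Ppoly n m (f z))" and "G = (\<lambda>z. Ppoly n m (g z))"
    and "H = (\<lambda>z. (deriv (deriv F) z / deriv F z - 2 * deriv F z / F z)
                 - (deriv (deriv G) z / deriv G z - 2 * deriv G z / G z))"
    and "\<exists>z0. \<exists>\<^sub>F w in at z0. H w \<noteq> 0"
    and "r \<ge> 1"
  shows "red_count (pole_points H) r
    \<le> red_count (a_points f 0) r + red_count (a_points f 1) r
     + red_count (a_points g 0) r + red_count (a_points g 1) r
     + red_count {z \<in> a_points F 0. zorder F z \<noteq> zorder G z} r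
     + red_count (pole_points f) r + red_count (pole_points g) r
     + red_count {z. \<not> is_pole f z \<and> deriv f z = 0 \<and> F z \<noteq> 0 \<and> f z \<noteq> 0 \<and> f z \<noteq> 1} r
     + red_count {z. \<not> is_pole g z \<and> deriv g z = 0 \<and> G z \<noteq> 0 \<and> g z \<noteq> 0 \<and> g z \<noteq> 1} r"
proof -
  note nmf = assms(3) and nmg = assms(4) and ncf = assms(5) and ncg = assms(6)
  note E = assms(7) and Fdef = assms(8) and Gdef = assms(9) and Hdef = assms(10)
  define S where "S = {z. Ppoly n m z = 0}"
  have finS: "finite S" unfolding S_def by (rule Ppoly_roots_finite)
  have FS: "F w = 0 \<longleftrightarrow> f w \<in> S" for w by (simp add: Fdef S_def)
  have GS: "G w = 0 \<longleftrightarrow> g w \<in> S" for w by (simp add: Gdef S_def)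
  define B1 where "B1 = a_points f 0"
  define B2 where "B2 = a_points f 1"
  define B3 where "B3 = a_points g 0"
  define B4 where "B4 = a_points g 1"
  define B5 where "B5 = {z \<in> a_points F 0. zorder F z \<noteq> zorder G z}"
  define B6 where "B6 = pole_points f"
  define B7 where "B7 = pole_points g"
  define B8 where "B8 = {z. \<not> is_pole f z \<and> deriv f z = 0 \<and> F z \<noteq> 0 \<and> f z \<noteq> 0 \<and> f z \<noteq> 1}"
  define B9 where "B9 = {z. \<not> is_pole g z \<and> deriv g z = 0 \<and> G z \<noteq> 0 \<and> g z \<noteq> 0 \<and> g z \<noteq> 1}"
  define Bs where "Bs = [B1, B2, B3, B4, B5, B6, B7, B8, B9]"

  have fin: "\<forall>B\<in>set Bs. finite (B \<inter> cball 0 r)"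
  proof -
    have sp: "X sparse_in UNIV \<Longrightarrow> Y \<subseteq> X \<Longrightarrow> finite (Y \<inter> cball 0 r)" for X Y :: "complex set"
      using fin_of_sparse[of X r] by (rule finite_subset[rotated]) auto
    have "finite (B1 \<inter> cball 0 r)"
      by (rule sp[OF value_sparse[OF nmf ncf, of 0]]) (auto simp: B1_def a_points_def)
    moreover have "finite (B2 \<inter> cball 0 r)"
      by (rule sp[OF value_sparse[OF nmf ncf, of 1]]) (auto simp: B2_def a_points_def)
    moreover have "finite (B3 \<inter> cball 0 r)"
      by (rule sp[OF value_sparse[OF nmg ncg, of 0]]) (auto simp: B3_def a_points_def)
    moreover have "finite (B4 \<inter> cball 0 r)"
      by (rule sp[OF value_sparse[OF nmg ncg, of 1]]) (auto simp: B4_def a_points_def)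
    moreover have "finite (B5 \<inter> cball 0 r)"
    proof (rule sp)
      show "(\<Union>c\<in>S. {z. f z = c}) sparse_in UNIV"
        by (rule sparse_in_UN_finite[OF _ finS]) (rule value_sparse[OF nmf ncf])
      show "B5 \<subseteq> (\<Union>c\<in>S. {z. f z = c})"
        by (auto simp: B5_def a_points_def FS)
    qed
    moreover have "finite (B6 \<inter> cball 0 r)"
      by (rule sp[OF pole_sparse[OF nmf]]) (auto simp: B6_def pole_points_def)
    moreover have "finite (B7 \<inter> cball 0 r)"
      by (rule sp[OF pole_sparse[OF nmg]]) (auto simp: B7_def pole_points_def)
    moreover have "finite (B8 \<inter> cball 0 r)"
      by (rule sp[OF deriv_sparse[OF nmf ncf]]) (auto simp: B8_def)
    moreover have "finite (B9 \<inter> cball 0 r)"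
      by (rule sp[OF deriv_sparse[OF nmg ncg]]) (auto simp: B9_def)
    ultimately show ?thesis by (simp add: Bs_def)
  qed

  have incl: "pole_points H \<subseteq> \<Union>(set Bs)"
  proof
    fix z assume zp: "z \<in> pole_points H"
    show "z \<in> \<Union>(set Bs)"
    proof (rule ccontr)
      assume nz: "z \<notin> \<Union>(set Bs)"
      have pf: "\<not> is_pole f z" using nz by (auto simp: Bs_def B6_def pole_points_def)
      have pg: "\<not> is_pole g z" using nz by (auto simp: Bs_def B7_def pole_points_def)
      have f0: "f z \<noteq> 0" "f z \<noteq> 1" using nz pf by (auto simp: Bs_def B1_def B2_def a_points_def)
      have g0: "g z \<noteq> 0" "g z \<noteq> 1" using nz pg by (auto simp: Bs_def B3_def B4_def a_points_def)
      have af: "f analytic_on {z}" by (rule nicely_meromorphic_on_imp_analytic_at[OF nmf UNIV_I pf])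
      have ag: "g analytic_on {z}" by (rule nicely_meromorphic_on_imp_analytic_at[OF nmg UNIV_I pg])
      have aF: "F analytic_on {z}"
        using analytic_on_compose_gen[OF af Ppoly_analytic[of n m UNIV]] by (simp add: o_def Fdef)
      have aG: "G analytic_on {z}"
        using analytic_on_compose_gen[OF ag Ppoly_analytic[of n m UNIV]] by (simp add: o_def Gdef)
      have ES: "f z \<in> S \<longleftrightarrow> g z \<in> S"
      proof -
        have "z \<in> E_set f S \<longleftrightarrow> z \<in> E_set g S" using E by (simp add: S_def)
        thus ?thesis using pf pg by (simp add: E_set_def)
      qed
      have "\<not> is_pole H z"
      proof (cases "F z = 0")
        case False
        hence GnZ: "G z \<noteq> 0" using ES FS GS by blast
        have df: "deriv f z \<noteq> 0" using nz pf False f0 by (auto simp: Bs_def B8_def)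
        have dg: "deriv g z \<noteq> 0" using nz pg GnZ g0 by (auto simp: Bs_def B9_def)
        have dF: "deriv F z = f z ^ n * (f z - 1) ^ m * deriv f z"
        proof -
          obtain e where e: "e > 0" "f holomorphic_on ball z e" using af analytic_at_ball by blast
          have "(f has_field_derivative deriv f z) (at z)"
            by (rule holomorphic_derivI[OF e(2)]) (use e(1) in auto)
          from DERIV_chain2[OF Ppoly_deriv this]
          have "((\<lambda>x. Ppoly n m (f x)) has_field_derivative f z ^ n * (f z - 1) ^ m * deriv f z) (at z)" .
          thus ?thesis unfolding Fdef by (rule DERIV_imp_deriv)
        qed
        have dG: "deriv G z = g z ^ n * (g z - 1) ^ m * deriv g z"
        proof -
          obtain e where e: "e > 0" "g holomorphic_on ball z e" using ag analytic_at_ball by blast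
          have "(g has_field_derivative deriv g z) (at z)"
            by (rule holomorphic_derivI[OF e(2)]) (use e(1) in auto)
          from DERIV_chain2[OF Ppoly_deriv this]
          have "((\<lambda>x. Ppoly n m (g x)) has_field_derivative g z ^ n * (g z - 1) ^ m * deriv g z) (at z)" .
          thus ?thesis unfolding Gdef by (rule DERIV_imp_deriv)
        qed
        have dFnz: "deriv F z \<noteq> 0" unfolding dF using f0 df by simp
        have dGnz: "deriv G z \<noteq> 0" unfolding dG using g0 dg by simp
        have "H analytic_on {z}"
          unfolding Hdef by (intro analytic_on_diff K1 aF aG False GnZ dFnz dGnz)
        thus ?thesis by (rule analytic_at_imp_no_pole)
      next
        case True
        have "\<not> is_pole F z" using aF by (rule analytic_at_imp_no_pole)
        hence "z \<in> a_points F 0" using True by (simp add: a_points_def)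
        hence zo: "zorder F z = zorder G z" using nz by (auto simp: Bs_def B5_def)
        have GZ: "G z = 0" using True ES FS GS by blast
        have evF: "eventually (\<lambda>w. F w \<noteq> 0) (at z)"
        proof -
          have "eventually (\<lambda>w. \<forall>c\<in>S. f w \<noteq> c) (at z)"
          proof (rule eventually_ball_finite[OF finS], rule ballI)
            fix c assume "c \<in> S"
            have "eventually (\<lambda>w. f w \<noteq> c) (cosparse UNIV)"
              using value_sparse[OF nmf ncf, of c] by (simp add: eventually_cosparse)
            thus "eventually (\<lambda>w. f w \<noteq> c) (at z)"
              using eventually_cosparse_imp_eventually_at[of _ UNIV z UNIV] by simp
          qed
          thus ?thesis by eventually_elim (use FS in auto)
        qed
        have evG: "eventually (\<lambda>w. G w \<noteq> 0) (at z)"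
        proof -
          have "eventually (\<lambda>w. \<forall>c\<in>S. g w \<noteq> c) (at z)"
          proof (rule eventually_ball_finite[OF finS], rule ballI)
            fix c assume "c \<in> S"
            have "eventually (\<lambda>w. g w \<noteq> c) (cosparse UNIV)"
              using value_sparse[OF nmg ncg, of c] by (simp add: eventually_cosparse)
            thus "eventually (\<lambda>w. g w \<noteq> c) (at z)"
              using eventually_cosparse_imp_eventually_at[of _ UNIV z UNIV] by simp
          qed
          thus ?thesis by eventually_elim (use GS in auto)
        qed
        obtain \<phi>1 e1 where K2F: "e1 > 0" "\<phi>1 holomorphic_on ball z e1"
            "\<forall>w\<in>ball z e1 - {z}. deriv (deriv F) w / deriv F w - 2 * deriv F w / F w
                 = \<phi>1 w - (of_int (zorder F z) + 1) / (w - z)"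
          using K2[OF aF True eventually_frequently[OF at_neq_bot evF]] by blast
        obtain \<phi>2 e2 where K2G: "e2 > 0" "\<phi>2 holomorphic_on ball z e2"
            "\<forall>w\<in>ball z e2 - {z}. deriv (deriv G) w / deriv G w - 2 * deriv G w / G w
                 = \<phi>2 w - (of_int (zorder G z) + 1) / (w - z)"
          using K2[OF aG GZ eventually_frequently[OF at_neq_bot evG]] by blast
        define e where "e = min e1 e2"
        have e: "e > 0" using K2F(1) K2G(1) by (simp add: e_def)
        have s1: "ball z e \<subseteq> ball z e1" and s2: "ball z e \<subseteq> ball z e2"
          by (auto simp: e_def)
        have hol: "(\<lambda>w. \<phi>1 w - \<phi>2 w) holomorphic_on ball z e"
          by (intro holomorphic_on_diff holomorphic_on_subset[OF K2F(2) s1] holomorphic_on_subset[OF K2G(2) s2])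
        have an: "(\<lambda>w. \<phi>1 w - \<phi>2 w) analytic_on {z}"
          using hol e analytic_at_ball by blast
        have ev: "eventually (\<lambda>w. H w = \<phi>1 w - \<phi>2 w) (at z)"
        proof -
          have "eventually (\<lambda>w. w \<in> ball z e - {z}) (at z)"
            by (rule eventually_at_in_open) (use e in auto)
          thus ?thesis
          proof eventually_elim
            case (elim w)
            hence w1: "w \<in> ball z e1 - {z}" and w2: "w \<in> ball z e2 - {z}" by (auto simp: e_def)
            show ?case unfolding Hdef using K2F(3)[rule_format, OF w1] K2G(3)[rule_format, OF w2] zo
              by simp
          qed
        qed
        have "\<not> is_pole (\<lambda>w. \<phi>1 w - \<phi>2 w) z" using an by (rule analytic_at_imp_no_pole)
        thus ?thesis using is_pole_cong[OF ev refl] by simp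
      qed
      thus False using zp by (simp add: pole_points_def)
    qed
  qed
  have "red_count (pole_points H) r \<le> (\<Sum>B\<leftarrow>Bs. red_count B r)"
    by (rule red_count_union_list[OF assms(12) incl fin])
  thus ?thesis
    by (simp add: Bs_def B1_def B2_def B3_def B4_def B5_def B6_def B7_def B8_def B9_def add.assoc)
qed

end
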